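(* Let $G=(V,E)$ be an undirected graph on $n$ vertices with integral edge weights (capacities) in $[0,W]$, and let $s,t\in V$. Then every non-circular $s$-$t$ flow of value $f$ in $G$ satisfies $\sum_{e\in E} |\phi(e)| = O(n\sqrt{fW})$, where $\phi(e)$ is the amount of flow carried by edge $e$ and the implied constant is absolute.
   Context: An $s$-$t$ flow assigns to each edge a direction and an amount of flow not exceeding its weight, with flow conservation at every vertex other than $s,t$; its value $f$ is the net flow leaving $s$. The flow is non-circular if there is no directed cycle of edges each carrying positive flow. *)

theory Defs
  imports Main "HOL-Library.Multiset" Complex_Main
begin

text \<open>Undirected weighted graph on a finite vertex set V: a symmetric integer weight
  function c; the edge {u,v} (u \<noteq> v) is present with weight c u v (weight 0 = absent,
  which is harmless for flows since an edge of weight 0 carries no flow).\<close>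
definition weighted_graph :: "'a set \<Rightarrow> ('a \<Rightarrow> 'a \<Rightarrow> int) \<Rightarrow> int \<Rightarrow> bool" where
  "weighted_graph V c W \<longleftrightarrow> finite V \<and>
     (\<forall>u v. c u v = c v u) \<and> (\<forall>u v. 0 \<le> c u v \<and> c u v \<le> W)"

text \<open>An s-t flow: phi u v is the signed flow along edge {u,v} in direction u to v;
  skew-symmetry encodes the choice of direction, the amount is bounded by the weight,
  and flow is conserved at every vertex other than s and t.\<close>
definition st_flow :: "'a set \<Rightarrow> ('a \<Rightarrow> 'a \<Rightarrow> int) \<Rightarrow> 'a \<Rightarrow> 'a \<Rightarrow> ('a \<Rightarrow> 'a \<Rightarrow> real) \<Rightarrow> bool" where
  "st_flow V c s t phi \<longleftrightarrow>
     (\<forall>u v. phi u v = - phi v u) \<and>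
     (\<forall>u\<in>V. \<forall>v\<in>V. \<bar>phi u v\<bar> \<le> real_of_int (c u v)) \<and>
     (\<forall>v\<in>V - {s, t}. (\<Sum>u\<in>V. phi v u) = 0)"

definition flow_value :: "'a set \<Rightarrow> 'a \<Rightarrow> ('a \<Rightarrow> 'a \<Rightarrow> real) \<Rightarrow> real" where
  "flow_value V s phi = (\<Sum>u\<in>V. phi s u)"

definition non_circular :: "'a set \<Rightarrow> ('a \<Rightarrow> 'a \<Rightarrow> real) \<Rightarrow> bool" where
  "non_circular V phi \<longleftrightarrow> acyclic {(u, v). u \<in> V \<and> v \<in> V \<and> phi u v > 0}"

text \<open>Sum over undirected edges of the amount of flow: each unordered pair counted once.\<close>
definition total_flow :: "'a set \<Rightarrow> ('a \<Rightarrow> 'a \<Rightarrow> real) \<Rightarrow> real" where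
  "total_flow V phi = (\<Sum>u\<in>V. \<Sum>v\<in>V. \<bar>phi u v\<bar>) / 2"

end

theory Submission
  imports Defs
begin

lemma topo:
  assumes "finite A" "acyclic R"
  shows "\<exists>\<pi>::'a\<Rightarrow>nat. inj_on \<pi> A \<and> (\<forall>x\<in>A. \<pi> x < card A) \<and>
          (\<forall>u\<in>A. \<forall>v\<in>A. (u,v)\<in>R \<longrightarrow> \<pi> u < \<pi> v)"
  using assms(1)
proof (induction A rule: finite_remove_induct)
  case empty
  then show ?case by simp
next
  case (remove A)
  have fR: "finite (R \<inter> A \<times> A)" using remove.hyps(1) by simp
  have aR: "acyclic (R \<inter> A \<times> A)" using assms(2) acyclic_subset by blast
  have "wf (R \<inter> A \<times> A)" using finite_acyclic_wf[OF fR aR] .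
  then obtain m where m: "m \<in> A" "\<forall>y. (y,m) \<in> R \<inter> A \<times> A \<longrightarrow> y \<notin> A"
  proof -
    obtain x where "x \<in> A" using remove.hyps(2) by blast
    then show ?thesis using that \<open>wf (R \<inter> A \<times> A)\<close> unfolding wf_eq_minimal by blast
  qed
  obtain \<pi>' where p: "inj_on \<pi>' (A - {m})" "\<forall>x\<in>A-{m}. \<pi>' x < card (A - {m})"
     "\<forall>u\<in>A-{m}. \<forall>v\<in>A-{m}. (u,v)\<in>R \<longrightarrow> \<pi>' u < \<pi>' v"
    using remove.IH[OF m(1)] by blast
  define \<pi> where "\<pi> x = (if x = m then 0 else Suc (\<pi>' x))" for x
  have c: "card (A - {m}) = card A - 1" using m(1) remove.hyps(1) by simp
  have cA: "card A > 0" using m(1) remove.hyps(1) card_gt_0_iff by blast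
  have "inj_on \<pi> A" using p(1) unfolding \<pi>_def inj_on_def by auto
  moreover have "\<forall>x\<in>A. \<pi> x < card A"
  proof
    fix x assume x: "x \<in> A"
    show "\<pi> x < card A"
    proof (cases "x = m")
      case True then show ?thesis using cA unfolding \<pi>_def by simp
    next
      case False
      then have "\<pi>' x < card A - 1" using p(2) c x by auto
      then show ?thesis using False unfolding \<pi>_def by simp
    qed
  qed
  moreover have "\<forall>u\<in>A. \<forall>v\<in>A. (u,v)\<in>R \<longrightarrow> \<pi> u < \<pi> v"
  proof (intro ballI impI)
    fix u v assume u: "u \<in> A" and v: "v \<in> A" and uv: "(u,v) \<in> R"
    have vm: "v \<noteq> m" using m(2) u v uv by blast
    show "\<pi> u < \<pi> v"
    proof (cases "u = m")
      case True then show ?thesis using vm unfolding \<pi>_def by simp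
    next
      case False
      then have "\<pi>' u < \<pi>' v" using p(3) u v vm uv by blast
      then show ?thesis using False vm unfolding \<pi>_def by simp
    qed
  qed
  ultimately show ?case by blast
qed


lemma antisym_sum:
  fixes phi :: "'a \<Rightarrow> 'a \<Rightarrow> real"
  assumes "\<forall>u v. phi u v = - phi v u"
  shows "(\<Sum>u\<in>S. \<Sum>v\<in>S. phi u v) = 0"
proof -
  have "(\<Sum>u\<in>S. \<Sum>v\<in>S. phi u v) = (\<Sum>v\<in>S. \<Sum>u\<in>S. phi u v)" by (rule sum.swap)
  also have "\<dots> = (\<Sum>v\<in>S. \<Sum>u\<in>S. - phi v u)"
    by (intro sum.cong refl) (use assms in blast)
  also have "\<dots> = - (\<Sum>v\<in>S. \<Sum>u\<in>S. phi v u)" by (simp add: sum_negf)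
  finally show ?thesis by simp
qed

lemma pick2:
  fixes out :: "'a \<Rightarrow> real"
  assumes "S \<subseteq> V" "finite V" "\<forall>v\<in>V-{s,t}. out v = 0"
  shows "(\<Sum>u\<in>S. out u) = (if s\<in>S then out s else 0) + (if t\<in>S \<and> t \<noteq> s then out t else 0)"
proof -
  have "(\<Sum>u\<in>S. out u) = (\<Sum>u\<in>S. (if u = s then out s else 0) + (if u = t \<and> t \<noteq> s then out t else 0))"
    by (rule sum.cong) (use assms in auto)
  also have "\<dots> = (if s\<in>S then out s else 0) + (if t\<in>S \<and> t \<noteq> s then out t else 0)"
    using assms(1,2) finite_subset[OF assms(1,2)] by (cases "t = s") (simp_all add: sum.distrib sum.delta)
  finally show ?thesis .
qed

lemma cut_bound:
  fixes phi :: "'a \<Rightarrow> 'a \<Rightarrow> real" and \<pi> :: "'a \<Rightarrow> nat"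
  assumes fin: "finite V" and anti: "\<forall>u v. phi u v = - phi v u"
    and cons: "\<forall>v\<in>V-{s,t}. (\<Sum>u\<in>V. phi v u) = 0"
    and sV: "s \<in> V" and tV: "t \<in> V"
    and mono: "\<forall>u\<in>V. \<forall>v\<in>V. phi u v > 0 \<longrightarrow> \<pi> u < \<pi> v"
  shows "(\<Sum>u\<in>V. \<Sum>v\<in>V. if \<pi> u < k \<and> k \<le> \<pi> v then \<bar>phi u v\<bar> else 0)
          \<le> \<bar>\<Sum>u\<in>V. phi s u\<bar>"
proof -
  define S where "S = {u\<in>V. \<pi> u < k}"
  define out where "out u = (\<Sum>v\<in>V. phi u v)" for u
  have SV: "S \<subseteq> V" and fS: "finite S" using fin unfolding S_def by auto
  have nonneg: "phi u v \<ge> 0" if "u \<in> S" "v \<in> V - S" for u v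
  proof (rule ccontr)
    assume "\<not> phi u v \<ge> 0"
    then have "phi v u > 0" using anti by (metis neg_0_less_iff_less not_le)
    then have "\<pi> v < \<pi> u" using mono that unfolding S_def by auto
    then show False using that unfolding S_def by auto
  qed
  have nonneg': "phi u v \<ge> 0" if "u \<in> V" "\<pi> u < k" "v \<in> V" "\<not> \<pi> v < k" for u v
    using nonneg[of u v] that unfolding S_def by auto
  have e1: "(\<Sum>u\<in>V. \<Sum>v\<in>V. if \<pi> u < k \<and> k \<le> \<pi> v then \<bar>phi u v\<bar> else 0)
      = (\<Sum>u\<in>S. \<Sum>v\<in>V-S. phi u v)"
  proof -
    have "(\<Sum>u\<in>V. \<Sum>v\<in>V. if \<pi> u < k \<and> k \<le> \<pi> v then \<bar>phi u v\<bar> else 0)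
        = (\<Sum>u\<in>V. if u \<in> S then (\<Sum>v\<in>V. if v \<in> V - S then phi u v else 0) else 0)"
      by (rule sum.cong, simp, auto intro!: sum.cong simp: S_def dest: nonneg')
    also have "\<dots> = (\<Sum>u\<in>S. (\<Sum>v\<in>V. if v \<in> V - S then phi u v else 0))"
      using fin SV by (simp add: sum.inter_filter[symmetric] S_def)
    also have "\<dots> = (\<Sum>u\<in>S. \<Sum>v\<in>V-S. phi u v)"
      using fin by (simp add: sum.inter_filter[symmetric] Diff_eq Int_def)
    finally show ?thesis .
  qed
  have e2: "(\<Sum>u\<in>S. out u) = (\<Sum>u\<in>S. \<Sum>v\<in>S. phi u v) + (\<Sum>u\<in>S. \<Sum>v\<in>V-S. phi u v)"
    unfolding out_def sum.distrib[symmetric]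
  proof (rule sum.cong)
    fix u assume "u \<in> S"
    have "V = S \<union> (V - S)" using SV by blast
    then show "(\<Sum>v\<in>V. phi u v) = (\<Sum>v\<in>S. phi u v) + (\<Sum>v\<in>V - S. phi u v)"
      using fS fin by (metis Diff_disjoint finite_Diff sum.union_disjoint)
  qed simp
  have e3: "(\<Sum>u\<in>S. out u) = (\<Sum>u\<in>S. \<Sum>v\<in>V-S. phi u v)"
    using e2 antisym_sum[OF anti] by simp
  have co: "\<forall>v\<in>V-{s,t}. out v = 0" using cons unfolding out_def by simp
  have tot: "(\<Sum>u\<in>V. out u) = 0" unfolding out_def using antisym_sum[OF anti] by simp
  have pV: "(\<Sum>u\<in>V. out u) = out s + (if t \<noteq> s then out t else 0)"
    using pick2[OF subset_refl fin co] sV tV by simp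
  have pS: "(\<Sum>u\<in>S. out u) = (if s\<in>S then out s else 0) + (if t\<in>S \<and> t \<noteq> s then out t else 0)"
    using pick2[OF SV fin co] .
  have "(\<Sum>u\<in>S. out u) \<le> \<bar>out s\<bar>"
  proof (cases "s = t")
    case True
    then have "out s = 0" using pV tot by simp
    then show ?thesis using pS True by simp
  next
    case False
    then have "out t = - out s" using pV tot by simp
    then show ?thesis using pS False by (cases "s \<in> S"; cases "t \<in> S") simp_all
  qed
  moreover have "out s = (\<Sum>u\<in>V. phi s u)" unfolding out_def ..
  ultimately show ?thesis unfolding trans[OF e1 e3[symmetric]] by simp
qed


lemma span_count:
  fixes a :: real and p q n :: nat
  assumes "p < q" "q < n"
  shows "(\<Sum>k\<in>{1..<n}. if p < k \<and> k \<le> q then a else 0) = a * real (q - p)"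
proof -
  have "(\<Sum>k\<in>{1..<n}. if p < k \<and> k \<le> q then a else 0) = (\<Sum>k\<in>{k\<in>{1..<n}. p < k \<and> k \<le> q}. a)"
    using sum.inter_filter[of "{1..<n}" "\<lambda>_. a" "\<lambda>k. p < k \<and> k \<le> q"] by simp
  also have "{k\<in>{1..<n}. p < k \<and> k \<le> q} = {p<..q}" using assms by auto
  finally show ?thesis by simp
qed

lemma core2:
  fixes phi :: "'a \<Rightarrow> 'a \<Rightarrow> real" and \<pi> :: "'a \<Rightarrow> nat" and W F :: real
  assumes fin: "finite V" and anti: "\<forall>u v. phi u v = - phi v u"
    and cap: "\<forall>u\<in>V. \<forall>v\<in>V. \<bar>phi u v\<bar> \<le> W"
    and inj: "inj_on \<pi> V" and rng: "\<forall>x\<in>V. \<pi> x < card V"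
    and cut: "\<forall>k. (\<Sum>u\<in>V. \<Sum>v\<in>V. if \<pi> u < k \<and> k \<le> \<pi> v then \<bar>phi u v\<bar> else 0) \<le> F"
    and W0: "W \<ge> 0" and F0: "F \<ge> 0"
  shows "(\<Sum>u\<in>V. \<Sum>v\<in>V. \<bar>phi u v\<bar>) / 2 \<le> 2 * real (card V) * sqrt (F * W)"
proof -
  define n where "n = card V"
  define a where "a u v = \<bar>phi u v\<bar>" for u v
  define T where "T = (\<Sum>u\<in>V. \<Sum>v\<in>V. if \<pi> u < \<pi> v then a u v else 0)"
  have asym: "a u v = a v u" for u v unfolding a_def using anti by (metis abs_minus_cancel)
  have a0: "a u v \<ge> 0" for u v unfolding a_def by simp
  have diag: "a u u = 0" for u unfolding a_def using anti by (metis abs_0 add.inverse_neutral equal_neg_zero)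
  have tot: "(\<Sum>u\<in>V. \<Sum>v\<in>V. a u v) = 2 * T"
  proof -
    have "(\<Sum>u\<in>V. \<Sum>v\<in>V. a u v) = (\<Sum>u\<in>V. \<Sum>v\<in>V. (if \<pi> u < \<pi> v then a u v else 0) + (if \<pi> v < \<pi> u then a u v else 0))"
    proof (intro sum.cong refl)
      fix u v assume "u \<in> V" "v \<in> V"
      then show "a u v = (if \<pi> u < \<pi> v then a u v else 0) + (if \<pi> v < \<pi> u then a u v else 0)"
        using inj diag unfolding inj_on_def by (cases "\<pi> u = \<pi> v") auto
    qed
    also have "\<dots> = T + (\<Sum>u\<in>V. \<Sum>v\<in>V. if \<pi> v < \<pi> u then a u v else 0)"
      unfolding T_def by (simp add: sum.distrib)
    also have "(\<Sum>u\<in>V. \<Sum>v\<in>V. if \<pi> v < \<pi> u then a u v else 0) = (\<Sum>v\<in>V. \<Sum>u\<in>V. if \<pi> v < \<pi> u then a v u else 0)"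
      by (subst sum.swap) (rule sum.cong[OF refl], rule sum.cong[OF refl], metis asym)
    also have "\<dots> = T" unfolding T_def ..
    finally show ?thesis by simp
  qed
  have span: "(\<Sum>u\<in>V. \<Sum>v\<in>V. if \<pi> u < \<pi> v then a u v * real (\<pi> v - \<pi> u) else 0) \<le> real n * F"
  proof -
    have "(\<Sum>u\<in>V. \<Sum>v\<in>V. if \<pi> u < \<pi> v then a u v * real (\<pi> v - \<pi> u) else 0)
       = (\<Sum>u\<in>V. \<Sum>v\<in>V. \<Sum>k\<in>{1..<n}. if \<pi> u < k \<and> k \<le> \<pi> v then a u v else 0)"
    proof (intro sum.cong refl)
      fix u v assume "u \<in> V" "v \<in> V"
      then show "(if \<pi> u < \<pi> v then a u v * real (\<pi> v - \<pi> u) else 0) = (\<Sum>k\<in>{1..<n}. if \<pi> u < k \<and> k \<le> \<pi> v then a u v else 0)"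
      proof (cases "\<pi> u < \<pi> v")
        case True
        then show ?thesis using span_count[of "\<pi> u" "\<pi> v" n "a u v"] rng \<open>v \<in> V\<close> unfolding n_def by auto
      next
        case False
        then have "\<forall>k. \<not> (\<pi> u < k \<and> k \<le> \<pi> v)" by auto
        then have "(\<Sum>k\<in>{1..<n}. if \<pi> u < k \<and> k \<le> \<pi> v then a u v else 0) = (\<Sum>k\<in>{1..<n}. 0)"
          by (intro sum.cong refl) presburger
        then show ?thesis using False by simp
      qed
    qed
    also have "\<dots> = (\<Sum>k\<in>{1..<n}. \<Sum>u\<in>V. \<Sum>v\<in>V. if \<pi> u < k \<and> k \<le> \<pi> v then a u v else 0)"
      by (subst sum.swap, rule sum.cong[OF refl], rule sum.swap)
    also have "\<dots> \<le> (\<Sum>k\<in>{1..<n}. F)"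
      unfolding a_def using cut by (intro sum_mono) blast
    also have "\<dots> \<le> real n * F" using F0 by (simp add: mult_right_mono)
    finally show ?thesis .
  qed
  have T0: "T \<ge> 0" unfolding T_def by (intro sum_nonneg) (simp add: a0)
  have main: "T \<le> 2 * real n * sqrt (F * W)"
  proof (cases "F = 0 \<or> W = 0")
    case True
    have "T \<le> (\<Sum>u\<in>V. \<Sum>v\<in>V. if \<pi> u < \<pi> v then a u v * real (\<pi> v - \<pi> u) else 0)"
      unfolding T_def
    proof (intro sum_mono)
      fix u v show "(if \<pi> u < \<pi> v then a u v else 0) \<le> (if \<pi> u < \<pi> v then a u v * real (\<pi> v - \<pi> u) else 0)"
      proof (cases "\<pi> u < \<pi> v")
        case True
        then have "real (\<pi> v - \<pi> u) \<ge> 1" by simp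
        then show ?thesis using True a0[of u v] mult_left_mono[of 1 "real (\<pi> v - \<pi> u)" "a u v"] by simp
      qed simp
    qed
    also have "\<dots> \<le> real n * F" by (rule span)
    finally have t1: "T \<le> real n * F" .
    have t2: "T \<le> 0" if "W = 0"
    proof -
      have "T \<le> (\<Sum>u\<in>V. \<Sum>v\<in>V. 0)" unfolding T_def
        by (intro sum_mono) (use cap that in \<open>auto simp: a_def\<close>)
      then show ?thesis by simp
    qed
    show ?thesis using True t1 t2 by auto
  next
    case False
    then have Fp: "F > 0" and Wp: "W > 0" using F0 W0 by auto
    define L where "L = sqrt (F / W)"
    have Lp: "L > 0" unfolding L_def using Fp Wp by simp
    have pt: "(if \<pi> u < \<pi> v then a u v else 0) \<le> (if \<pi> u < \<pi> v \<and> real (\<pi> v - \<pi> u) \<le> L then W else 0)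
         + (if \<pi> u < \<pi> v then a u v * real (\<pi> v - \<pi> u) else 0) / L" if "u \<in> V" "v \<in> V" for u v
    proof (cases "\<pi> u < \<pi> v")
      case True
      have aW: "a u v \<le> W" using cap that unfolding a_def by auto
      show ?thesis
      proof (cases "real (\<pi> v - \<pi> u) \<le> L")
        case True
        have "0 \<le> a u v * real (\<pi> v - \<pi> u) / L" using a0[of u v] Lp by simp
        then show ?thesis using True \<open>\<pi> u < \<pi> v\<close> aW by simp
      next
        case False
        then have "a u v * L \<le> a u v * real (\<pi> v - \<pi> u)" using a0[of u v] by (simp add: mult_left_mono)
        then have "a u v \<le> a u v * real (\<pi> v - \<pi> u) / L" using Lp by (simp add: field_simps)
        then show ?thesis using False \<open>\<pi> u < \<pi> v\<close> by simp
      qed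
    qed simp
    have cnt: "(\<Sum>v\<in>V. if \<pi> u < \<pi> v \<and> real (\<pi> v - \<pi> u) \<le> L then W else 0) \<le> W * L" for u
    proof -
      define B where "B = {v\<in>V. \<pi> u < \<pi> v \<and> real (\<pi> v - \<pi> u) \<le> L}"
      have "(\<Sum>v\<in>V. if \<pi> u < \<pi> v \<and> real (\<pi> v - \<pi> u) \<le> L then W else 0) = W * real (card B)"
        unfolding B_def using fin by (simp add: sum.inter_filter[symmetric])
      moreover have "card B \<le> card {\<pi> u<..\<pi> u + nat \<lfloor>L\<rfloor>}"
      proof (rule card_inj_on_le)
        show "inj_on \<pi> B" using inj unfolding B_def by (rule inj_on_subset) auto
        show "\<pi> ` B \<subseteq> {\<pi> u<..\<pi> u + nat \<lfloor>L\<rfloor>}"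
        proof
          fix y assume "y \<in> \<pi> ` B"
          then obtain v where v: "v \<in> B" "y = \<pi> v" by blast
          then have "\<pi> u < \<pi> v" "real (\<pi> v - \<pi> u) \<le> L" unfolding B_def by auto
          then have "int (\<pi> v - \<pi> u) \<le> \<lfloor>L\<rfloor>" by (simp add: le_floor_iff)
          then show "y \<in> {\<pi> u<..\<pi> u + nat \<lfloor>L\<rfloor>}" using v \<open>\<pi> u < \<pi> v\<close> by auto
        qed
      qed simp
      then have "card B \<le> nat \<lfloor>L\<rfloor>" by simp
      then have cb1: "real (card B) \<le> real (nat \<lfloor>L\<rfloor>)" by (simp only: of_nat_le_iff)
      have cb2: "real (nat \<lfloor>L\<rfloor>) \<le> L" using Lp by linarith
      have "real (card B) \<le> L" using cb1 cb2 by linarith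
      ultimately show ?thesis using Wp by (simp add: mult_left_mono)
    qed
    have "T \<le> (\<Sum>u\<in>V. \<Sum>v\<in>V. (if \<pi> u < \<pi> v \<and> real (\<pi> v - \<pi> u) \<le> L then W else 0)
         + (if \<pi> u < \<pi> v then a u v * real (\<pi> v - \<pi> u) else 0) / L)"
      unfolding T_def by (intro sum_mono pt)
    also have "\<dots> = (\<Sum>u\<in>V. \<Sum>v\<in>V. if \<pi> u < \<pi> v \<and> real (\<pi> v - \<pi> u) \<le> L then W else 0)
         + (\<Sum>u\<in>V. \<Sum>v\<in>V. if \<pi> u < \<pi> v then a u v * real (\<pi> v - \<pi> u) else 0) / L"
      by (simp add: sum.distrib sum_divide_distrib)
    also have "\<dots> \<le> (\<Sum>u\<in>V. W * L) + real n * F / L"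
      by (intro add_mono sum_mono cnt divide_right_mono span) (use Lp in simp)
    also have "\<dots> = real n * (W * L) + real n * (F / L)" unfolding n_def by simp
    also have "W * L = sqrt (F * W)"
    proof -
      have "sqrt (F * W) = sqrt ((F / W) * (W * W))" using Wp by (simp add: field_simps)
      also have "\<dots> = L * W" unfolding L_def real_sqrt_mult real_sqrt_mult_self using Wp by simp
      finally show ?thesis by simp
    qed
    also have "F / L = sqrt (F * W)"
    proof -
      have "sqrt (F * W) * L = sqrt (F * F)" unfolding L_def real_sqrt_mult[symmetric]
        using Wp by (simp add: field_simps)
      also have "\<dots> = F" using Fp by simp
      finally show ?thesis using Lp by (simp add: field_simps)
    qed
    finally show ?thesis by simp
  qed
  have "(\<Sum>u\<in>V. \<Sum>v\<in>V. \<bar>phi u v\<bar>) = 2 * T" using tot unfolding a_def .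
  then show ?thesis using main unfolding n_def by simp
qed

theorem mainTheorem12:
  shows "\<exists>C::real. \<forall>(V::nat set) c W s t phi.
     weighted_graph V c W \<and> s \<in> V \<and> t \<in> V \<and> st_flow V c s t phi \<and> non_circular V phi
     \<longrightarrow> total_flow V phi \<le> C * real (card V) * sqrt (\<bar>flow_value V s phi\<bar> * real_of_int W)"
proof (intro exI allI impI)
  fix V :: "nat set" and c W s t phi
  assume H: "weighted_graph V c W \<and> s \<in> V \<and> t \<in> V \<and> st_flow V c s t phi \<and> non_circular V phi"
  have fin: "finite V" and sym: "\<forall>u v. 0 \<le> c u v \<and> c u v \<le> W"
    using H unfolding weighted_graph_def by blast+
  have sV: "s \<in> V" and tV: "t \<in> V" using H by blast+
  have anti: "\<forall>u v. phi u v = - phi v u"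
    and capc: "\<forall>u\<in>V. \<forall>v\<in>V. \<bar>phi u v\<bar> \<le> real_of_int (c u v)"
    and cons: "\<forall>v\<in>V - {s, t}. (\<Sum>u\<in>V. phi v u) = 0"
    using H unfolding st_flow_def by blast+
  have acy: "acyclic {(u, v). u \<in> V \<and> v \<in> V \<and> phi u v > 0}"
    using H unfolding non_circular_def by blast
  obtain \<pi> :: "nat \<Rightarrow> nat" where p: "inj_on \<pi> V" "\<forall>x\<in>V. \<pi> x < card V"
    "\<forall>u\<in>V. \<forall>v\<in>V. (u,v)\<in>{(u, v). u \<in> V \<and> v \<in> V \<and> phi u v > 0} \<longrightarrow> \<pi> u < \<pi> v"
    using topo[OF fin acy] by blast
  have mono: "\<forall>u\<in>V. \<forall>v\<in>V. phi u v > 0 \<longrightarrow> \<pi> u < \<pi> v" using p(3) by auto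
  have cap: "\<forall>u\<in>V. \<forall>v\<in>V. \<bar>phi u v\<bar> \<le> real_of_int W"
  proof (intro ballI)
    fix u v assume "u \<in> V" "v \<in> V"
    then have "\<bar>phi u v\<bar> \<le> real_of_int (c u v)" using capc by auto
    also have "\<dots> \<le> real_of_int W" using sym by simp
    finally show "\<bar>phi u v\<bar> \<le> real_of_int W" .
  qed
  have W0: "real_of_int W \<ge> 0" using sym[rule_format, of s s] by simp
  have cut: "\<forall>k. (\<Sum>u\<in>V. \<Sum>v\<in>V. if \<pi> u < k \<and> k \<le> \<pi> v then \<bar>phi u v\<bar> else 0) \<le> \<bar>\<Sum>u\<in>V. phi s u\<bar>"
    using cut_bound[OF fin anti cons sV tV mono] by blast
  have "(\<Sum>u\<in>V. \<Sum>v\<in>V. \<bar>phi u v\<bar>) / 2 \<le> 2 * real (card V) * sqrt (\<bar>\<Sum>u\<in>V. phi s u\<bar> * real_of_int W)"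
    by (rule core2[OF fin anti cap p(1) p(2) cut W0]) simp
  then show "total_flow V phi \<le> 2 * real (card V) * sqrt (\<bar>flow_value V s phi\<bar> * real_of_int W)"
    unfolding total_flow_def flow_value_def .
qed

end
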